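(* Let $0<q<1$, let $a,b,c,d\in\mathbb{C}$ with $aq\notin\{q^{-m}:m\in\mathbb{N}\}$, let $|t|<1$ with $tc,td\notin\{q^{-m}:m\in\mathbb{N}\}$, let $n\in\mathbb{N}$ and $x=\cos\theta$, $\theta\in[0,\pi]$. Then \[ \sum_{k=0}^\infty\frac{t^k}{(q;q)_k}\,p_n(q^k;a,b;q)\,Q_k(x;c,d|q)=\frac{(tc,td;q)_\infty}{(te^{i\theta},te^{-i\theta};q)_\infty}\,{}_4\phi_3\!\left(\begin{matrix}q^{-n},\,abq^{n+1},\,te^{i\theta},\,te^{-i\theta}\\ aq,\,tc,\,td\end{matrix};q,q\right). \]
   Context: $(x;q)_k=\prod_{j=0}^{k-1}(1-xq^j)$, $(x;q)_\infty=\prod_{j\ge0}(1-xq^j)$, $(x_1,\dots,x_r;q)_k=\prod_i(x_i;q)_k$. ${}_{r}\phi_{s}\!\left(\begin{smallmatrix}a_1,\dots,a_r\\ b_1,\dots,b_s\end{smallmatrix};q,z\right)=\sum_{j\ge0}\frac{(a_1,\dots,a_r;q)_j}{(q,b_1,\dots,b_s;q)_j}\bigl((-1)^jq^{j(j-1)/2}\bigr)^{1+s-r}z^j$. Little $q$-Jacobi polynomials: $p_n(x;a,b;q)={}_2\phi_1\!\left(\begin{smallmatrix}q^{-n},abq^{n+1}\\ aq\end{smallmatrix};q,qx\right)$. Al-Salam–Chihara polynomials: $Q_n(x;c,d|q)=\frac{(cd;q)_n}{c^n}\,{}_3\phi_2\!\left(\begin{smallmatrix}q^{-n},ce^{i\theta},ce^{-i\theta}\\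 cd,\,0\end{smallmatrix};q,q\right)$, $x=\cos\theta$. *)

theory Defs
  imports "HOL-Analysis.Analysis"
begin

definition qpoch :: "complex \<Rightarrow> complex \<Rightarrow> nat \<Rightarrow> complex" where
  "qpoch x q k = (\<Prod>j<k. 1 - x * q ^ j)"

definition qpoch_inf :: "complex \<Rightarrow> complex \<Rightarrow> complex" where
  "qpoch_inf x q = lim (\<lambda>k. qpoch x q k)"

definition qphi :: "complex list \<Rightarrow> complex list \<Rightarrow> complex \<Rightarrow> complex \<Rightarrow> complex" where
  "qphi as bs q z =
     (\<Sum>j. prod_list (map (\<lambda>a. qpoch a q j) as)
            / (qpoch q q j * prod_list (map (\<lambda>b. qpoch b q j) bs))
            * ((-1) ^ j * q ^ (j * (j - 1) div 2)) powi (1 + int (length bs) - int (length as))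
            * z ^ j)"

definition little_qJacobi :: "nat \<Rightarrow> complex \<Rightarrow> complex \<Rightarrow> complex \<Rightarrow> complex \<Rightarrow> complex" where
  "little_qJacobi n x a b q = qphi [inverse (q ^ n), a * b * q ^ (n + 1)] [a * q] q (q * x)"

definition al_salam_chihara :: "nat \<Rightarrow> real \<Rightarrow> complex \<Rightarrow> complex \<Rightarrow> complex \<Rightarrow> complex" where
  "al_salam_chihara n \<theta> c d q =
     qpoch (c * d) q n / c ^ n * qphi [inverse (q ^ n), c * cis \<theta>, c * cis (- \<theta>)] [c * d, 0] q q"

end

theory Submission
  imports Defs
begin

lemma qpoch_0[simp]: "qpoch x q 0 = 1" by (simp add: qpoch_def)
lemma qpoch_Suc: "qpoch x q (Suc n) = qpoch x q n * (1 - x * q ^ n)"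
  by (simp add: qpoch_def)
lemma qpoch_Suc': "qpoch x q (Suc n) = (1 - x) * qpoch (x * q) q n"
  unfolding qpoch_def by (subst prod.lessThan_Suc_shift) (simp add: mult.assoc)
lemma qpoch_add: "qpoch x q (m + n) = qpoch x q m * qpoch (x * q ^ m) q n"
  by (induct n) (simp_all add: qpoch_Suc power_add mult.assoc mult.commute mult.left_commute)
lemma qpoch_zero_base[simp]: "qpoch 0 q n = 1" by (simp add: qpoch_def)

lemma qpoch_qq_nz: "norm q < 1 \<Longrightarrow> qpoch q q m \<noteq> 0"
proof (induct m)
  case (Suc m)
  have "norm (q * q ^ m) < 1"
    by (metis Suc.prems norm_power power_Suc power_less_one_iff norm_ge_zero zero_less_Suc)
  hence "1 - q * q^m \<noteq> 0" by auto
  thus ?case using Suc by (simp add: qpoch_Suc)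
qed simp

lemma qpoch_nz_small: "norm x < 1 \<Longrightarrow> norm q < 1 \<Longrightarrow> qpoch x q m \<noteq> 0"
proof (induct m)
  case (Suc m)
  have "norm (x * q^m) < 1"
  proof -
    have "norm (x * q^m) = norm x * norm q ^ m" by (simp add: norm_mult norm_power)
    also have "\<dots> \<le> norm x" using Suc.prems
      by (simp add: mult_left_le power_le_one)
    finally show ?thesis using Suc.prems by simp
  qed
  hence "1 - x * q^m \<noteq> 0" by auto
  thus ?case using Suc by (simp add: qpoch_Suc)
qed simp

definition cf :: "complex \<Rightarrow> complex \<Rightarrow> nat \<Rightarrow> complex" where
  "cf a q m = qpoch a q m / qpoch q q m"

lemma cf_Suc: "norm q < 1 \<Longrightarrow> cf a q (Suc m) * (1 - q ^ Suc m) = cf a q m * (1 - a * q ^ m)"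
  using qpoch_qq_nz[of q m] qpoch_qq_nz[of q "Suc m"]
  by (simp add: cf_def qpoch_Suc field_simps)

lemma cf_summable:
  assumes q: "norm q < 1" and z: "norm z < 1"
  shows "summable (\<lambda>m. norm (cf a q m * z ^ m))"
proof -
  define c where "c = (1 + norm z) / 2"
  have c1: "c < 1" using z by (simp add: c_def)
  have lim: "(\<lambda>m. (1 + norm a * norm q ^ m) * norm z / (1 - norm q ^ Suc m)) \<longlonglongrightarrow>
      (1 + norm a * 0) * norm z / (1 - 0)"
    using q by (intro tendsto_intros LIMSEQ_power_zero LIMSEQ_Suc) auto
  have "norm z < c" using z by (simp add: c_def)
  hence "eventually (\<lambda>m. (1 + norm a * norm q ^ m) * norm z / (1 - norm q ^ Suc m) < c) sequentially"
    using order_tendstoD(2)[OF lim] by simp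
  then obtain N where N: "\<And>m. m \<ge> N \<Longrightarrow> (1 + norm a * norm q ^ m) * norm z / (1 - norm q ^ Suc m) < c"
    by (auto simp: eventually_sequentially)
  show ?thesis
  proof (rule summable_ratio_test[OF c1, of N])
    fix m assume m: "m \<ge> N"
    have qs: "norm q ^ Suc m < 1" using q by (metis norm_ge_zero power_less_one_iff zero_less_Suc)
    have "norm (q ^ Suc m) < 1" using qs by (simp only: norm_power)
    hence nz: "1 - q ^ Suc m \<noteq> 0" by auto
    have eq: "cf a q (Suc m) = cf a q m * (1 - a * q ^ m) / (1 - q ^ Suc m)"
      using cf_Suc[OF q, of a m] nz by (simp add: field_simps)
    have n1: "norm (1 - a * q ^ m) \<le> 1 + norm a * norm q ^ m"
      using norm_triangle_ineq4[of 1 "a * q^m"] by (simp add: norm_mult norm_power)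
    have n2: "1 - norm q ^ Suc m \<le> norm (1 - q ^ Suc m)"
      using norm_triangle_ineq2[of 1 "q ^ Suc m"] by (simp only: norm_power norm_one)
    have pos: "0 < 1 - norm q ^ Suc m" using qs by simp
    have r: "norm (1 - a * q ^ m) * norm z / norm (1 - q ^ Suc m) \<le> c"
    proof -
      have "norm (1 - a * q ^ m) * norm z / norm (1 - q ^ Suc m)
          \<le> (1 + norm a * norm q ^ m) * norm z / (1 - norm q ^ Suc m)"
        by (intro frac_le mult_right_mono n1 n2 pos) auto
      thus ?thesis using N[OF m] by simp
    qed
    have "norm (cf a q (Suc m) * z ^ Suc m) =
        norm (cf a q m * z ^ m) * (norm (1 - a * q ^ m) * norm z / norm (1 - q ^ Suc m))"
      by (simp add: eq norm_mult norm_divide norm_power)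
    also have "\<dots> \<le> norm (cf a q m * z ^ m) * c"
      by (intro mult_left_mono r) auto
    finally show "norm (norm (cf a q (Suc m) * z ^ Suc m)) \<le> c * norm (norm (cf a q m * z ^ m))"
      by (simp add: mult.commute)
  qed
qed

definition fA :: "complex \<Rightarrow> complex \<Rightarrow> complex \<Rightarrow> complex" where
  "fA a q z = (\<Sum>m. cf a q m * z ^ m)"

lemma fA_sums: "norm q < 1 \<Longrightarrow> norm z < 1 \<Longrightarrow> (\<lambda>m. cf a q m * z ^ m) sums fA a q z"
  unfolding fA_def by (rule summable_sums, rule summable_norm_cancel, rule cf_summable)

lemma norm_qz: fixes q z :: complex shows "norm q < 1 \<Longrightarrow> norm z < 1 \<Longrightarrow> norm (q * z) < 1"
  using mult_strict_mono[of "norm q" 1 "norm z" 1] by (simp add: norm_mult)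

lemma fA_fe:
  assumes q: "norm q < 1" and z: "norm z < 1"
  shows "fA a q z - fA a q (q * z) = z * fA a q z - a * z * fA a q (q * z)"
proof -
  have s1: "(\<lambda>m. cf a q m * z ^ m - cf a q m * (q * z) ^ m) sums (fA a q z - fA a q (q * z))"
    by (intro sums_diff fA_sums q z norm_qz)
  have "(\<lambda>m. cf a q m * (1 - q ^ m) * z ^ m) sums (fA a q z - fA a q (q * z))"
    using s1 by (simp add: algebra_simps power_mult_distrib)
  hence s2: "(\<lambda>m. cf a q (Suc m) * (1 - q ^ Suc m) * z ^ Suc m) sums (fA a q z - fA a q (q * z))"
    by (subst sums_Suc_iff) simp
  have s3: "(\<lambda>m. z * (cf a q m * z ^ m - a * (cf a q m * (q * z) ^ m))) sums
      (z * (fA a q z - a * fA a q (q * z)))"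
    by (intro sums_mult sums_diff fA_sums q z norm_qz)
  have eqf: "(\<lambda>m. cf a q (Suc m) * (1 - q ^ Suc m) * z ^ Suc m) =
        (\<lambda>m. z * (cf a q m * z ^ m - a * (cf a q m * (q * z) ^ m)))"
  proof
    fix m
    have "cf a q (Suc m) * (1 - q ^ Suc m) * z ^ Suc m = cf a q m * (1 - a * q ^ m) * z ^ Suc m"
      using cf_Suc[OF q] by simp
    thus "cf a q (Suc m) * (1 - q ^ Suc m) * z ^ Suc m = z * (cf a q m * z ^ m - a * (cf a q m * (q * z) ^ m))"
      by (simp add: algebra_simps power_mult_distrib)
  qed
  have "fA a q z - fA a q (q * z) = z * (fA a q z - a * fA a q (q * z))"
    using sums_unique2[OF s2[unfolded eqf] s3] .
  thus ?thesis by (simp add: algebra_simps)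
qed

lemma norm_qpz: fixes q z :: complex assumes q: "norm q < 1" and z: "norm z < 1" shows "norm (q ^ N * z) < 1"
proof (induct N)
  case (Suc N)
  have e: "q ^ Suc N * z = q * (q ^ N * z)" by (simp add: mult.assoc)
  show ?case unfolding e by (rule norm_qz[OF q Suc])
qed (simp add: z)

lemma fA_iter:
  assumes q: "norm q < 1" and z: "norm z < 1"
  shows "fA a q z * qpoch z q N = qpoch (a * z) q N * fA a q (q ^ N * z)"
proof (induct N)
  case (Suc N)
  have fe: "fA a q (q^N*z) * (1 - q^N*z) = (1 - a * (q^N*z)) * fA a q (q * (q^N*z))"
    using fA_fe[OF q norm_qpz[OF q z, of N], of a] by (simp add: algebra_simps)
  have "fA a q z * qpoch z q (Suc N) = qpoch (a * z) q N * (fA a q (q ^ N * z) * (1 - q^N*z))"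
    using Suc by (simp add: qpoch_Suc algebra_simps)
  also have "\<dots> = qpoch (a * z) q N * ((1 - a * (q^N*z)) * fA a q (q * (q^N*z)))"
    by (simp only: fe)
  also have "\<dots> = qpoch (a * z) q (Suc N) * fA a q (q ^ Suc N * z)"
  proof -
    have e: "q * (q^N*z) = q ^ Suc N * z" by (simp add: mult.assoc)
    show ?thesis unfolding e qpoch_Suc by (simp only: mult_ac)
  qed
  finally show ?case .
qed simp

lemma fA_cont:
  assumes q: "norm q < 1" and z: "norm z < 1"
  shows "(\<lambda>N. fA a q (q ^ N * z)) \<longlonglongrightarrow> 1"
proof -
  have sm: "summable (\<lambda>m. cf a q m * (1/2) ^ m)"
    by (rule summable_norm_cancel, rule cf_summable[OF q]) simp
  have ic: "isCont (fA a q) 0"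
    unfolding fA_def[abs_def] by (rule isCont_powser[OF sm]) simp
  have "(\<lambda>N. q ^ N * z) \<longlonglongrightarrow> 0 * z"
    by (intro tendsto_intros LIMSEQ_power_zero q)
  hence "(\<lambda>N. fA a q (q ^ N * z)) \<longlonglongrightarrow> fA a q 0"
    using isCont_tendsto_compose[OF ic] by simp
  moreover have "fA a q 0 = cf a q 0" unfolding fA_def by (rule powser_zero)
  moreover have "cf a q 0 = 1" by (simp add: cf_def)
  ultimately show ?thesis by simp
qed

lemma qpoch_lim_small:
  assumes q: "norm q < 1" and z: "norm z < 1"
  shows "(\<lambda>N. qpoch z q N) \<longlonglongrightarrow> inverse (fA 0 q z)" and "fA 0 q z \<noteq> 0"
proof -
  have eq: "\<And>N. fA 0 q z * qpoch z q N = fA 0 q (q ^ N * z)"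
    using fA_iter[OF q z, of 0] by simp
  have l: "(\<lambda>N. fA 0 q z * qpoch z q N) \<longlonglongrightarrow> 1"
    unfolding eq by (rule fA_cont[OF q z])
  show nz: "fA 0 q z \<noteq> 0"
  proof
    assume "fA 0 q z = 0"
    with l have "(\<lambda>N. 0::complex) \<longlonglongrightarrow> 1" by simp
    thus False using LIMSEQ_unique[OF tendsto_const] by fastforce
  qed
  have "(\<lambda>N. inverse (fA 0 q z) * (fA 0 q z * qpoch z q N)) \<longlonglongrightarrow> inverse (fA 0 q z) * 1"
    by (intro tendsto_intros l)
  moreover have "(\<lambda>N. inverse (fA 0 q z) * (fA 0 q z * qpoch z q N)) = qpoch z q"
    using nz by (auto simp: fun_eq_iff)
  ultimately show "(\<lambda>N. qpoch z q N) \<longlonglongrightarrow> inverse (fA 0 q z)" by simp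
qed

lemma qpoch_conv:
  assumes q: "norm q < 1"
  shows "(\<lambda>N. qpoch x q N) \<longlonglongrightarrow> qpoch_inf x q"
proof -
  have "(\<lambda>M. x * q ^ M) \<longlonglongrightarrow> x * 0" by (intro tendsto_intros LIMSEQ_power_zero q)
  hence "(\<lambda>M. norm (x * q ^ M)) \<longlonglongrightarrow> 0" by (simp add: tendsto_norm_zero)
  from order_tendstoD(2)[OF this, of 1]
  have "eventually (\<lambda>M. norm (x * q ^ M) < 1) sequentially" by simp
  then obtain M where M: "norm (x * q ^ M) < 1" by (auto simp: eventually_sequentially)
  have "(\<lambda>N. qpoch x q M * qpoch (x * q ^ M) q N) \<longlonglongrightarrow> qpoch x q M * inverse (fA 0 q (x * q ^ M))"
    by (intro tendsto_intros qpoch_lim_small q M)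
  moreover have "\<And>N. qpoch x q (N + M) = qpoch x q M * qpoch (x*q^M) q N"
    by (metis add.commute qpoch_add)
  ultimately have "(\<lambda>N. qpoch x q (N + M)) \<longlonglongrightarrow> qpoch x q M * inverse (fA 0 q (x * q ^ M))"
    by simp
  hence "(\<lambda>N. qpoch x q N) \<longlonglongrightarrow> qpoch x q M * inverse (fA 0 q (x * q ^ M))"
    by (rule LIMSEQ_offset)
  moreover from this have "lim (qpoch x q) = qpoch x q M * inverse (fA 0 q (x * q ^ M))" by (rule limI)
  ultimately show ?thesis unfolding qpoch_inf_def by simp
qed

lemma qpoch_inf_shift:
  assumes q: "norm q < 1"
  shows "qpoch_inf x q = qpoch x q j * qpoch_inf (x * q ^ j) q"
proof -
  have "(\<lambda>N. qpoch x q (j + N)) \<longlonglongrightarrow> qpoch x q j * qpoch_inf (x * q ^ j) q"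
    unfolding qpoch_add by (intro tendsto_intros qpoch_conv q)
  hence "(\<lambda>N. qpoch x q (N + j)) \<longlonglongrightarrow> qpoch x q j * qpoch_inf (x * q ^ j) q"
    by (simp add: add.commute)
  hence "(\<lambda>N. qpoch x q N) \<longlonglongrightarrow> qpoch x q j * qpoch_inf (x * q ^ j) q" by (rule LIMSEQ_offset)
  from LIMSEQ_unique[OF qpoch_conv[OF q, of x] this] show ?thesis .
qed

lemma qpoch_inf_nz: "norm q < 1 \<Longrightarrow> norm z < 1 \<Longrightarrow> qpoch_inf z q \<noteq> 0"
  using LIMSEQ_unique[OF qpoch_conv[of q z] qpoch_lim_small(1)[of q z]] qpoch_lim_small(2)[of q z] by simp

lemma qbinomial:
  assumes q: "norm q < 1" and z: "norm z < 1"
  shows "fA a q z = qpoch_inf (a * z) q / qpoch_inf z q"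
proof -
  have "(\<lambda>N. fA a q z * qpoch z q N) \<longlonglongrightarrow> fA a q z * qpoch_inf z q"
    by (intro tendsto_intros qpoch_conv q)
  moreover have "(\<lambda>N. fA a q z * qpoch z q N) \<longlonglongrightarrow> qpoch_inf (a * z) q * 1"
    unfolding fA_iter[OF q z] by (intro tendsto_intros qpoch_conv q fA_cont z)
  ultimately have "fA a q z * qpoch_inf z q = qpoch_inf (a * z) q * 1"
    by (rule LIMSEQ_unique)
  thus ?thesis using qpoch_inf_nz[OF q z] by (simp add: field_simps)
qed

lemma const_q:
  fixes f :: "complex \<Rightarrow> complex"
  assumes q: "norm q < 1" and c: "isCont f 0" and fe: "\<And>z. f z = f (z * q)"
  shows "f z = f 0"
proof -
  have eq: "\<And>N. f z = f (z * q ^ N)"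
  proof -
    fix N show "f z = f (z * q ^ N)"
      by (induct N) (simp, metis fe mult.assoc mult.commute power_Suc)
  qed
  have "(\<lambda>N. z * q ^ N) \<longlonglongrightarrow> z * 0" by (intro tendsto_intros LIMSEQ_power_zero q)
  hence "(\<lambda>N. f (z * q ^ N)) \<longlonglongrightarrow> f 0" using isCont_tendsto_compose[OF c] by simp
  hence "(\<lambda>N. f z) \<longlonglongrightarrow> f 0" by (simp only: eq[symmetric])
  thus ?thesis using LIMSEQ_unique[OF tendsto_const] by blast
qed

lemma qpoch_diff: "qpoch A q (Suc j) = qpoch (A * q) q (Suc j) - A * (1 - q ^ Suc j) * qpoch (A * q) q j"
  by (simp only: qpoch_Suc'[of A] qpoch_Suc[of "A*q"]) (simp add: algebra_simps)

lemma qpoch_one_Suc[simp]: "qpoch 1 q (Suc j) = 0"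
  by (simp add: qpoch_Suc')

definition U :: "complex \<Rightarrow> nat \<Rightarrow> complex \<Rightarrow> complex" where
  "U q k A = (\<Sum>j\<le>k. qpoch (inverse (q ^ k)) q j * qpoch A q j * q ^ j / qpoch q q j)"

lemma U_rec:
  assumes q0: "q \<noteq> 0" and q: "norm q < 1"
  shows "U q (Suc k) A = U q (Suc k) (A * q) - A * q * (1 - inverse (q ^ Suc k)) * U q k (A * q)"
proof -
  define x where "x = inverse (q ^ Suc k)"
  have xq: "x * q = inverse (q ^ k)" using q0 by (simp add: x_def field_simps)
  have t: "qpoch x q (Suc j) * qpoch A q (Suc j) * q ^ Suc j / qpoch q q (Suc j)
      = qpoch x q (Suc j) * qpoch (A*q) q (Suc j) * q ^ Suc j / qpoch q q (Suc j)
        - A * q * (1 - x) * (qpoch (inverse (q ^ k)) q j * qpoch (A * q) q j * q ^ j / qpoch q q j)" for j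
  proof -
    have n1: "qpoch q q j \<noteq> 0" by (rule qpoch_qq_nz[OF q])
    have n2: "1 - q ^ Suc j \<noteq> 0" using qpoch_qq_nz[OF q, of "Suc j"] by (simp add: qpoch_Suc)
    have e1: "qpoch x q (Suc j) = (1 - x) * qpoch (inverse (q^k)) q j"
      using qpoch_Suc'[of x q j] xq by simp
    have e2: "qpoch q q (Suc j) = qpoch q q j * (1 - q^Suc j)" by (simp add: qpoch_Suc)
    show ?thesis
      unfolding qpoch_diff[of A q j] e1 e2
      using n1 n2 by (simp add: field_simps)
  qed
  have "U q (Suc k) A = (\<Sum>j\<le>Suc k. qpoch x q j * qpoch A q j * q ^ j / qpoch q q j)"
    by (simp add: U_def x_def)
  also have "\<dots> = 1 + (\<Sum>j\<le>k. qpoch x q (Suc j) * qpoch A q (Suc j) * q ^ Suc j / qpoch q q (Suc j))"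
    by (subst sum.atMost_Suc_shift) simp
  also have "\<dots> = 1 + (\<Sum>j\<le>k. qpoch x q (Suc j) * qpoch (A*q) q (Suc j) * q ^ Suc j / qpoch q q (Suc j))
      - A * q * (1 - x) * U q k (A * q)"
    unfolding t sum_subtractf U_def sum_distrib_left by (simp only: diff_add_eq add_diff_eq)
  also have "1 + (\<Sum>j\<le>k. qpoch x q (Suc j) * qpoch (A*q) q (Suc j) * q ^ Suc j / qpoch q q (Suc j))
      = U q (Suc k) (A * q)"
    unfolding U_def x_def by (subst sum.atMost_Suc_shift) simp
  finally show ?thesis by (simp add: x_def)
qed

lemma U_val:
  assumes q0: "q \<noteq> 0" and q: "norm q < 1"
  shows "U q k A = A ^ k"
proof (induct k arbitrary: A)
  case 0 show ?case by (simp add: U_def)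
next
  case (Suc k)
  define W where "W = (\<lambda>A. U q (Suc k) A - A ^ Suc k)"
  have fe: "W A = W (A * q)" for A
  proof -
    have "W A = U q (Suc k) (A * q) - A * q * (1 - inverse (q ^ Suc k)) * (A * q) ^ k - A ^ Suc k"
      unfolding W_def by (subst U_rec[OF q0 q]) (simp add: Suc)
    also have "\<dots> = W (A * q)"
      using q0 by (simp add: W_def field_simps)
    finally show ?thesis .
  qed
  have ct: "isCont W 0"
    unfolding W_def U_def qpoch_def
    by (intro continuous_intros) (auto simp: qpoch_qq_nz[OF q, unfolded qpoch_def])
  have "W A = W 0" by (rule const_q[OF q ct fe])
  moreover have "W 1 = W 0" by (rule const_q[OF q ct fe])
  moreover have "W 1 = 0"
  proof -
    have "U q (Suc k) 1 = 1"
      unfolding U_def by (subst sum.atMost_Suc_shift) simp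
    thus ?thesis by (simp add: W_def)
  qed
  ultimately show ?case by (simp add: W_def)
qed

lemma delta_rel:
  assumes "x * q ^ K = 1"
  shows "qpoch (x * q) q j * (1 - q ^ K) = qpoch x q j * (q ^ j - q ^ K)"
proof (induct j)
  case 0 show ?case by simp
next
  case (Suc j)
  have d: "(q ^ j - q ^ K) * (1 - x * q * q ^ j) - (1 - x * q ^ j) * (q ^ Suc j - q ^ K)
      = q ^ j * (1 - q) * (1 - x * q ^ K)"
    by (simp add: algebra_simps)
  have key: "(q ^ j - q ^ K) * (1 - x * q * q ^ j) = (1 - x * q ^ j) * (q ^ Suc j - q ^ K)"
    using d assms by simp
  have "qpoch (x * q) q (Suc j) * (1 - q ^ K) = (qpoch (x * q) q j * (1 - q ^ K)) * (1 - x * q * q ^ j)"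
    by (simp add: qpoch_Suc algebra_simps)
  also have "\<dots> = qpoch x q j * ((q ^ j - q ^ K) * (1 - x * q * q ^ j))" by (simp add: Suc)
  also have "\<dots> = qpoch x q (Suc j) * (q ^ Suc j - q ^ K)"
    unfolding key by (simp add: qpoch_Suc)
  finally show ?case .
qed

definition tC :: "complex \<Rightarrow> complex \<Rightarrow> complex \<Rightarrow> complex \<Rightarrow> nat \<Rightarrow> nat \<Rightarrow> complex \<Rightarrow> complex" where
  "tC q c e eb m l d = qpoch (c * eb) q m * qpoch (d * e) q l * e ^ m * eb ^ l / (qpoch q q m * qpoch q q l)"

definition Ck :: "complex \<Rightarrow> complex \<Rightarrow> complex \<Rightarrow> complex \<Rightarrow> nat \<Rightarrow> complex \<Rightarrow> complex" where
  "Ck q c e eb k d = (\<Sum>m\<le>k. tC q c e eb m (k - m) d)"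

lemma tC_rec:
  assumes q: "norm q < 1" and ee: "e * eb = 1"
  shows "tC q c e eb m (Suc l) d = tC q c e eb m (Suc l) (d * q) - d * tC q c e eb m l (d * q)"
proof -
  have a: "d * q * e = d * e * q" by (simp add: ac_simps)
  have n1: "qpoch q q m \<noteq> 0" "qpoch q q l \<noteq> 0" by (rule qpoch_qq_nz[OF q])+
  have n2: "1 - q ^ Suc l \<noteq> 0" using qpoch_qq_nz[OF q, of "Suc l"] by (simp add: qpoch_Suc)
  have e2: "qpoch q q (Suc l) = qpoch q q l * (1 - q^Suc l)" by (simp add: qpoch_Suc)
  have eb2: "eb ^ Suc l = eb * eb ^ l" by simp
  have ee2: "\<And>z. e * (eb * z) = z" using ee by (metis mult.assoc mult_1)
  show ?thesis
    unfolding tC_def a qpoch_diff[of "d*e" q l] e2 eb2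
    using n1 n2 by (simp add: field_simps ee ee2)
qed

lemma Ck_rec:
  assumes q: "norm q < 1" and ee: "e * eb = 1"
  shows "Ck q c e eb (Suc k) d = Ck q c e eb (Suc k) (d * q) - d * Ck q c e eb k (d * q)"
proof -
  have s: "\<And>d. Ck q c e eb (Suc k) d = (\<Sum>m\<le>k. tC q c e eb m (Suc (k - m)) d) + tC q c e eb (Suc k) 0 d"
  proof -
    fix d
    have "(\<Sum>m\<le>k. tC q c e eb m (Suc k - m) d) = (\<Sum>m\<le>k. tC q c e eb m (Suc (k - m)) d)"
      by (rule sum.cong) (auto simp: Suc_diff_le)
    thus "Ck q c e eb (Suc k) d = (\<Sum>m\<le>k. tC q c e eb m (Suc (k - m)) d) + tC q c e eb (Suc k) 0 d"
      unfolding Ck_def sum.atMost_Suc by simp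
  qed
  have z: "tC q c e eb (Suc k) 0 d = tC q c e eb (Suc k) 0 (d * q)" by (simp add: tC_def)
  have r: "(\<Sum>m\<le>k. tC q c e eb m (Suc (k - m)) d) =
      (\<Sum>m\<le>k. tC q c e eb m (Suc (k - m)) (d * q) - d * tC q c e eb m (k - m) (d * q))"
    by (rule sum.cong[OF refl]) (rule tC_rec[OF q ee])
  show ?thesis
    unfolding s z unfolding Ck_def[of q c e eb k] r sum_subtractf sum_distrib_left
    by (simp only: algebra_simps)
qed

definition Xj :: "complex \<Rightarrow> complex \<Rightarrow> complex \<Rightarrow> complex \<Rightarrow> nat \<Rightarrow> complex" where
  "Xj q c e eb j = qpoch (c * e) q j * qpoch (c * eb) q j * q ^ j / qpoch q q j"

definition tP :: "complex \<Rightarrow> complex \<Rightarrow> complex \<Rightarrow> complex \<Rightarrow> nat \<Rightarrow> nat \<Rightarrow> complex \<Rightarrow> complex" where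
  "tP q c e eb k j d = qpoch (inverse (q ^ k)) q j * Xj q c e eb j * qpoch (c * d * q ^ j) q (k - j)"

definition Pk :: "complex \<Rightarrow> complex \<Rightarrow> complex \<Rightarrow> complex \<Rightarrow> nat \<Rightarrow> complex \<Rightarrow> complex" where
  "Pk q c e eb k d = (\<Sum>j\<le>k. tP q c e eb k j d) / (c ^ k * qpoch q q k)"

lemma algP:
  fixes dk dK qK qj c ck Qk X R d :: complex
  assumes h: "dk * (1 - qK) = dK * (qj - qK)" and nz: "c \<noteq> 0" "ck \<noteq> 0" "Qk \<noteq> 0" "1 - qK \<noteq> 0"
  shows "dK * X * ((1 - c*d*qj) * R) / (c*ck*(Qk*(1-qK)))
       = dK * X * (R * (1 - c*d*qK)) / (c*ck*(Qk*(1-qK))) - d * (dk * X * R / (ck*Qk))"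
proof -
  have "d * (dk * X * R / (ck*Qk)) = c*d*X*R*(dk*(1-qK)) / (c*ck*(Qk*(1-qK)))"
    using nz by (simp add: field_simps)
  also have "\<dots> = c*d*X*R*(dK*(qj-qK)) / (c*ck*(Qk*(1-qK)))" by (simp only: h)
  finally have eq: "d * (dk * X * R / (ck*Qk)) = c*d*X*R*(dK*(qj-qK)) / (c*ck*(Qk*(1-qK)))" .
  have n: "dK*X*((1-c*d*qj)*R) = dK*X*(R*(1-c*d*qK)) - c*d*X*R*(dK*(qj-qK))"
    by (simp add: algebra_simps)
  show ?thesis unfolding eq n by (rule diff_divide_distrib)
qed

lemma tP_rec:
  assumes q0: "q \<noteq> 0" and q: "norm q < 1" and c0: "c \<noteq> 0" and j: "j \<le> k"
  shows "tP q c e eb (Suc k) j d / (c ^ Suc k * qpoch q q (Suc k))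
       = tP q c e eb (Suc k) j (d * q) / (c ^ Suc k * qpoch q q (Suc k))
         - d * (tP q c e eb k j (d * q) / (c ^ k * qpoch q q k))"
proof -
  define l where "l = k - j"
  have kl: "Suc k - j = Suc l" "k - j = l" "Suc k = Suc (j + l)" using j by (auto simp: l_def)
  define R where "R = qpoch (c * d * q ^ j * q) q l"
  have P1: "qpoch (c*d*q^j) q (Suc l) = (1 - c*d*q^j) * R"
    unfolding R_def by (rule qpoch_Suc')
  have P2: "qpoch (c*(d*q)*q^j) q (Suc l) = R * (1 - c*d*q^Suc k)"
    unfolding R_def qpoch_Suc kl(3) by (simp add: ac_simps power_add)
  have P3: "qpoch (c*(d*q)*q^j) q l = R"
    unfolding R_def by (simp add: ac_simps)
  have QK: "qpoch q q (Suc k) = qpoch q q k * (1 - q ^ Suc k)" by (simp add: qpoch_Suc)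
  have n2: "1 - q ^ Suc k \<noteq> 0" using qpoch_qq_nz[OF q, of "Suc k"] by (simp add: qpoch_Suc)
  have h: "qpoch (inverse (q ^ k)) q j * (1 - q ^ Suc k) = qpoch (inverse (q ^ Suc k)) q j * (q ^ j - q ^ Suc k)"
  proof -
    have e: "inverse (q ^ Suc k) * q = inverse (q ^ k)" using q0 by (simp add: field_simps)
    have "inverse (q ^ Suc k) * q ^ Suc k = 1" by (rule left_inverse) (simp add: q0)
    from delta_rel[of "inverse (q ^ Suc k)" q "Suc k" j, OF this] show ?thesis unfolding e .
  qed
  have cp: "c ^ Suc k = c * c ^ k" by simp
  show ?thesis
    unfolding tP_def kl(1,2) P1 P2 P3 QK cp
    by (rule algP[OF h c0 _ qpoch_qq_nz[OF q] n2]) (simp add: c0)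
qed

lemma Pk_rec:
  assumes q0: "q \<noteq> 0" and q: "norm q < 1" and c0: "c \<noteq> 0"
  shows "Pk q c e eb (Suc k) d = Pk q c e eb (Suc k) (d * q) - d * Pk q c e eb k (d * q)"
proof -
  have s: "\<And>d. Pk q c e eb (Suc k) d = (\<Sum>j\<le>k. tP q c e eb (Suc k) j d / (c ^ Suc k * qpoch q q (Suc k)))
      + tP q c e eb (Suc k) (Suc k) d / (c ^ Suc k * qpoch q q (Suc k))"
    by (simp only: Pk_def sum.atMost_Suc add_divide_distrib sum_divide_distrib)
  have z: "tP q c e eb (Suc k) (Suc k) d = tP q c e eb (Suc k) (Suc k) (d * q)" by (simp add: tP_def)
  have s2: "Pk q c e eb k (d * q) = (\<Sum>j\<le>k. tP q c e eb k j (d * q) / (c ^ k * qpoch q q k))"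
    unfolding Pk_def by (simp add: sum_divide_distrib)
  have "(\<Sum>j\<le>k. tP q c e eb (Suc k) j d / (c ^ Suc k * qpoch q q (Suc k))) =
        (\<Sum>j\<le>k. tP q c e eb (Suc k) j (d*q) / (c ^ Suc k * qpoch q q (Suc k))
         - d * (tP q c e eb k j (d * q) / (c ^ k * qpoch q q k)))"
    by (rule sum.cong[OF refl], rule tP_rec[OF q0 q c0]) simp
  thus ?thesis unfolding s z s2 sum_subtractf sum_distrib_left by simp
qed

lemma isCont_qpoch: "isCont f x \<Longrightarrow> isCont (\<lambda>d. qpoch (f d) q n) x"
  unfolding qpoch_def by (intro continuous_intros)

lemma Ck_eb:
  assumes q: "norm q < 1" and ee: "e * eb = 1"
  shows "Ck q c e eb k eb = qpoch (c * eb) q k * e ^ k / qpoch q q k"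
proof (cases k)
  case 0 thus ?thesis by (simp add: Ck_def tC_def)
next
  case (Suc k')
  have be: "eb * e = 1" using ee by (simp add: mult.commute)
  have z: "(\<Sum>m\<le>k'. tC q c e eb m (Suc k' - m) eb) = 0"
  proof (rule sum.neutral, rule ballI)
    fix m assume "m \<in> {..k'}"
    hence "Suc k' - m = Suc (k' - m)" by auto
    thus "tC q c e eb m (Suc k' - m) eb = 0" by (simp add: tC_def be)
  qed
  show ?thesis unfolding Suc Ck_def sum.atMost_Suc z by (simp add: tC_def)
qed

lemma Pk_eb:
  assumes q0: "q \<noteq> 0" and q: "norm q < 1" and c0: "c \<noteq> 0"
  shows "Pk q c e eb k eb = qpoch (c * eb) q k * e ^ k / qpoch q q k"
proof -
  have t: "tP q c e eb k j eb = qpoch (c*eb) q k *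
      (qpoch (inverse (q^k)) q j * qpoch (c*e) q j * q^j / qpoch q q j)" if j: "j \<le> k" for j
  proof -
    have "qpoch (c*eb) q k = qpoch (c*eb) q (j + (k - j))" using j by simp
    also have "\<dots> = qpoch (c*eb) q j * qpoch (c*eb*q^j) q (k-j)" by (rule qpoch_add)
    finally have qa: "qpoch (c*eb) q k = qpoch (c*eb) q j * qpoch (c*eb*q^j) q (k-j)" .
    show ?thesis using qpoch_qq_nz[OF q, of j] by (simp add: tP_def Xj_def qa field_simps)
  qed
  have "(\<Sum>j\<le>k. tP q c e eb k j eb) = qpoch (c*eb) q k * U q k (c * e)"
    unfolding U_def sum_distrib_left by (rule sum.cong[OF refl]) (simp add: t)
  also have "\<dots> = qpoch (c*eb) q k * (c * e) ^ k" by (simp add: U_val[OF q0 q])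
  finally show ?thesis
    unfolding Pk_def using c0 qpoch_qq_nz[OF q, of k] by (simp add: field_simps power_mult_distrib)
qed

lemma PC:
  assumes q0: "q \<noteq> 0" and q: "norm q < 1" and c0: "c \<noteq> 0" and ee: "e * eb = 1"
  shows "Pk q c e eb k d = Ck q c e eb k d"
proof (induct k arbitrary: d)
  case 0 show ?case by (simp add: Pk_def Ck_def tP_def tC_def Xj_def)
next
  case (Suc k)
  define W where "W = (\<lambda>d. Pk q c e eb (Suc k) d - Ck q c e eb (Suc k) d)"
  have fe: "W d = W (d * q)" for d
  proof -
    have a: "Pk q c e eb (Suc k) d = Pk q c e eb (Suc k) (d * q) - d * Pk q c e eb k (d * q)"
      by (rule Pk_rec[OF q0 q c0])
    have b: "Ck q c e eb (Suc k) d = Ck q c e eb (Suc k) (d * q) - d * Ck q c e eb k (d * q)"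
      by (rule Ck_rec[OF q ee])
    have "W d = (Pk q c e eb (Suc k) (d * q) - d * Pk q c e eb k (d * q))
        - (Ck q c e eb (Suc k) (d * q) - d * Ck q c e eb k (d * q))"
      unfolding W_def by (rule arg_cong2[where f = minus, OF a b])
    also have "\<dots> = W (d * q)" unfolding W_def Suc[of "d * q"] by simp
    finally show ?thesis .
  qed
  have ct: "isCont W 0"
    unfolding W_def Pk_def Ck_def tP_def tC_def
    by (intro continuous_intros isCont_qpoch) (simp_all add: qpoch_qq_nz[OF q] c0)
  have "W d = W 0" by (rule const_q[OF q ct fe])
  moreover have "W eb = W 0" by (rule const_q[OF q ct fe])
  moreover have "W eb = 0" unfolding W_def Pk_eb[OF q0 q c0] Ck_eb[OF q ee] by simp
  ultimately show ?case by (simp add: W_def)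
qed

lemma GF:
  assumes q: "norm q < 1" and ee: "e * eb = 1" and ne: "norm e = 1" and neb: "norm eb = 1"
    and s: "norm s < 1"
  shows "(\<lambda>k. s ^ k * Ck q c e eb k d) sums
     (qpoch_inf (s * c) q * qpoch_inf (s * d) q / (qpoch_inf (s * e) q * qpoch_inf (s * eb) q))"
proof -
  define a where "a = (\<lambda>m. cf (c * eb) q m * (s * e) ^ m)"
  define b where "b = (\<lambda>m. cf (d * e) q m * (s * eb) ^ m)"
  have n1: "norm (s * e) < 1" using s ne by (simp add: norm_mult)
  have n2: "norm (s * eb) < 1" using s neb by (simp add: norm_mult)
  have sa: "summable (\<lambda>k. norm (a k))" unfolding a_def by (rule cf_summable[OF q n1])
  have sb: "summable (\<lambda>k. norm (b k))" unfolding b_def by (rule cf_summable[OF q n2])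
  have A: "suminf a = qpoch_inf (s * c) q / qpoch_inf (s * e) q"
  proof -
    have "suminf a = fA (c * eb) q (s * e)" by (simp add: a_def fA_def)
    also have "\<dots> = qpoch_inf (c * eb * (s * e)) q / qpoch_inf (s * e) q" by (rule qbinomial[OF q n1])
    also have "c * eb * (s * e) = s * c" using ee by (simp add: ac_simps)
    finally show ?thesis .
  qed
  have B: "suminf b = qpoch_inf (s * d) q / qpoch_inf (s * eb) q"
  proof -
    have "suminf b = fA (d * e) q (s * eb)" by (simp add: b_def fA_def)
    also have "\<dots> = qpoch_inf (d * e * (s * eb)) q / qpoch_inf (s * eb) q" by (rule qbinomial[OF q n2])
    also have "d * e * (s * eb) = s * d" using ee by (simp add: ac_simps)
    finally show ?thesis .
  qed
  have tm: "(\<Sum>i\<le>k. a i * b (k - i)) = s ^ k * Ck q c e eb k d" for k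
  proof -
    have "(\<Sum>i\<le>k. a i * b (k - i)) = (\<Sum>i\<le>k. s ^ k * tC q c e eb i (k - i) d)"
    proof (rule sum.cong[OF refl])
      fix i assume "i \<in> {..k}"
      hence sk: "s ^ k = s ^ i * s ^ (k - i)" by (simp add: power_add[symmetric])
      show "a i * b (k - i) = s ^ k * tC q c e eb i (k - i) d"
        unfolding a_def b_def tC_def cf_def sk by (simp add: power_mult_distrib field_simps)
    qed
    thus ?thesis by (simp add: Ck_def sum_distrib_left)
  qed
  have "(\<lambda>k. \<Sum>i\<le>k. a i * b (k - i)) sums (suminf a * suminf b)"
    by (rule Cauchy_product_sums[OF sa sb])
  thus ?thesis unfolding tm A B by simp
qed

lemma qpoch_inv_zero:
  assumes q0: "q \<noteq> 0" and j: "n < j"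
  shows "qpoch (inverse (q ^ n)) q j = 0"
  unfolding qpoch_def using j q0 by (intro prod_zero) (auto intro!: bexI[of _ n])

lemma qpoch_nz_gen:
  assumes "\<forall>m::nat. x \<noteq> inverse (q ^ m)" and q0: "q \<noteq> 0"
  shows "qpoch x q j \<noteq> 0"
proof
  assume "qpoch x q j = 0"
  then obtain i where "1 - x * q ^ i = 0" by (auto simp: qpoch_def prod_zero_iff)
  hence "x = inverse (q ^ i)" using q0 by (simp add: field_simps)
  with assms(1) show False by blast
qed

lemma qphi_fin:
  assumes q0: "q \<noteq> 0" and len: "length as = length bs"
  shows "qphi (inverse (q ^ n) # as) bs q z =
    (\<Sum>j\<le>n. qpoch (inverse (q ^ n)) q j * prod_list (map (\<lambda>a. qpoch a q j) as)
       / (qpoch q q j * prod_list (map (\<lambda>b. qpoch b q j) bs)) * z ^ j)"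
  unfolding qphi_def using len
  by (subst suminf_finite[where N = "{..n}"]) (auto simp: qpoch_inv_zero[OF q0])

theorem mainTheorem6:
  fixes q \<theta> :: real and a b c d t :: complex and n :: nat
  assumes "0 < q" "q < 1"
    and "\<forall>m::nat. a * of_real q \<noteq> inverse (of_real q ^ m)"
    and "norm t < 1"
    and "\<forall>m::nat. t * c \<noteq> inverse (of_real q ^ m)"
    and "\<forall>m::nat. t * d \<noteq> inverse (of_real q ^ m)"
    and "c \<noteq> 0"
    and "\<forall>m::nat. c * d \<noteq> inverse (of_real q ^ m)"
    and "0 \<le> \<theta>" "\<theta> \<le> pi"
  shows "(\<lambda>k. t ^ k / qpoch (of_real q) (of_real q) k
              * little_qJacobi n (of_real q ^ k) a b (of_real q)
              * al_salam_chihara k \<theta> c d (of_real q))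
         sums (qpoch_inf (t * c) (of_real q) * qpoch_inf (t * d) (of_real q)
               / (qpoch_inf (t * cis \<theta>) (of_real q) * qpoch_inf (t * cis (- \<theta>)) (of_real q))
               * qphi [inverse (of_real q ^ n), a * b * of_real q ^ (n + 1), t * cis \<theta>, t * cis (- \<theta>)]
                      [a * of_real q, t * c, t * d] (of_real q) (of_real q))"
proof -
  define Q :: complex where "Q = of_real q"
  define e where "e = cis \<theta>"
  define eb where "eb = cis (- \<theta>)"
  have Q0: "Q \<noteq> 0" using assms(1) by (simp add: Q_def)
  have QQ: "norm Q < 1" using assms(1,2) by (simp add: Q_def)
  have ee: "e * eb = 1" by (simp add: e_def eb_def cis_mult)
  have ne: "norm e = 1" and neb: "norm eb = 1" by (simp_all add: e_def eb_def)
  have t1: "norm t < 1" by (rule assms(4))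
  have aQ: "\<And>j. qpoch (a * Q) Q j \<noteq> 0" using qpoch_nz_gen[OF _ Q0] assms(3) by (simp add: Q_def)
  have tc: "\<And>j. qpoch (t * c) Q j \<noteq> 0" using qpoch_nz_gen[OF _ Q0] assms(5) by (simp add: Q_def)
  have td: "\<And>j. qpoch (t * d) Q j \<noteq> 0" using qpoch_nz_gen[OF _ Q0] assms(6) by (simp add: Q_def)
  have cd: "\<And>j. qpoch (c * d) Q j \<noteq> 0" using qpoch_nz_gen[OF _ Q0] assms(8) by (simp add: Q_def)
  have c0: "c \<noteq> 0" by (rule assms(7))
  have nte: "norm (t * e) < 1" and nteb: "norm (t * eb) < 1" using t1 ne neb by (simp_all add: norm_mult)
  have te: "\<And>j. qpoch (t * e) Q j \<noteq> 0" by (rule qpoch_nz_small[OF nte QQ])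
  have teb: "\<And>j. qpoch (t * eb) Q j \<noteq> 0" by (rule qpoch_nz_small[OF nteb QQ])
  have Ie: "qpoch_inf (t * e) Q \<noteq> 0" by (rule qpoch_inf_nz[OF QQ nte])
  have Ieb: "qpoch_inf (t * eb) Q \<noteq> 0" by (rule qpoch_inf_nz[OF QQ nteb])

  have ASC: "al_salam_chihara k \<theta> c d Q = qpoch Q Q k * Ck Q c e eb k d" for k
  proof -
    have "al_salam_chihara k \<theta> c d Q = qpoch (c*d) Q k / c^k *
       (\<Sum>j\<le>k. qpoch (inverse (Q^k)) Q j * (qpoch (c*e) Q j * qpoch (c*eb) Q j)
          / (qpoch Q Q j * (qpoch (c*d) Q j * qpoch 0 Q j)) * Q^j)"
      unfolding al_salam_chihara_def
      by (subst qphi_fin[OF Q0]) (simp_all add: e_def eb_def)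
    also have "\<dots> = (\<Sum>j\<le>k. tP Q c e eb k j d) / c ^ k"
      unfolding sum_distrib_left sum_divide_distrib
    proof (rule sum.cong[OF refl])
      fix j assume "j \<in> {..k}"
      hence j: "j \<le> k" by simp
      have "qpoch (c*d) Q k = qpoch (c*d) Q (j + (k - j))" using j by simp
      also have "\<dots> = qpoch (c*d) Q j * qpoch (c*d*Q^j) Q (k-j)" by (rule qpoch_add)
      finally have qa: "qpoch (c*d) Q k = qpoch (c*d) Q j * qpoch (c*d*Q^j) Q (k-j)" .
      show "qpoch (c*d) Q k / c^k * (qpoch (inverse (Q^k)) Q j * (qpoch (c*e) Q j * qpoch (c*eb) Q j)
          / (qpoch Q Q j * (qpoch (c*d) Q j * qpoch 0 Q j)) * Q^j) = tP Q c e eb k j d / c ^ k"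
        unfolding qa tP_def Xj_def using cd[of j] qpoch_qq_nz[OF QQ, of j] c0
        by (simp add: field_simps)
    qed
    also have "\<dots> = qpoch Q Q k * Pk Q c e eb k d"
      unfolding Pk_def using qpoch_qq_nz[OF QQ, of k] c0 by (simp add: field_simps)
    also have "\<dots> = qpoch Q Q k * Ck Q c e eb k d" by (simp add: PC[OF Q0 QQ c0 ee])
    finally show ?thesis .
  qed

  define \<alpha> where "\<alpha> = (\<lambda>j. qpoch (inverse (Q^n)) Q j * qpoch (a*b*Q^(n+1)) Q j
      / (qpoch Q Q j * qpoch (a*Q) Q j) * Q^j)"
  have LJ: "little_qJacobi n (Q^k) a b Q = (\<Sum>j\<le>n. \<alpha> j * (Q^j)^k)" for k
    unfolding little_qJacobi_def
    by (subst qphi_fin[OF Q0], simp, rule sum.cong[OF refl]) (simp add: \<alpha>_def power_mult_distrib power_mult[symmetric] mult.commute)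

  define G where "G = (\<lambda>s. qpoch_inf (s * c) Q * qpoch_inf (s * d) Q / (qpoch_inf (s * e) Q * qpoch_inf (s * eb) Q))"

  have TM: "t ^ k / qpoch Q Q k * little_qJacobi n (Q^k) a b Q * al_salam_chihara k \<theta> c d Q
      = (\<Sum>j\<le>n. \<alpha> j * ((t * Q^j)^k * Ck Q c e eb k d))" for k
    unfolding LJ ASC sum_distrib_left sum_distrib_right
    by (rule sum.cong[OF refl]) (use qpoch_qq_nz[OF QQ, of k] in \<open>simp add: field_simps power_mult_distrib\<close>)

  have S: "(\<lambda>k. \<Sum>j\<le>n. \<alpha> j * ((t * Q^j)^k * Ck Q c e eb k d)) sums (\<Sum>j\<le>n. \<alpha> j * G (t * Q^j))"
  proof (rule sums_sum, rule sums_mult)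
    fix j
    have "norm (t * Q^j) = norm t * norm Q ^ j" by (simp add: norm_mult norm_power)
    also have "\<dots> \<le> norm t" using QQ by (simp add: mult_left_le power_le_one)
    finally have ns: "norm (t * Q^j) < 1" using t1 by simp
    show "(\<lambda>k. (t * Q^j)^k * Ck Q c e eb k d) sums G (t * Q^j)"
      unfolding G_def by (rule GF[OF QQ ee ne neb ns])
  qed

  have shift: "qpoch_inf (t * Q^j * x) Q = qpoch_inf (t * x) Q / qpoch (t * x) Q j"
    if "qpoch (t * x) Q j \<noteq> 0" for x j
  proof -
    have "qpoch_inf (t * x) Q = qpoch (t * x) Q j * qpoch_inf (t * x * Q ^ j) Q"
      by (rule qpoch_inf_shift[OF QQ])
    moreover have "t * x * Q ^ j = t * Q^j * x" by (simp add: ac_simps)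
    ultimately show ?thesis using that by (simp add: field_simps)
  qed

  have RHS: "G t * qphi [inverse (Q ^ n), a * b * Q ^ (n + 1), t * e, t * eb] [a * Q, t * c, t * d] Q Q
      = (\<Sum>j\<le>n. \<alpha> j * G (t * Q^j))"
    apply (subst qphi_fin[OF Q0], simp)
    unfolding sum_distrib_left
  proof (rule sum.cong[OF refl])
    fix j
    show "G t * (qpoch (inverse (Q ^ n)) Q j *
            prod_list (map (\<lambda>a. qpoch a Q j) [a * b * Q ^ (n + 1), t * e, t * eb]) /
           (qpoch Q Q j * prod_list (map (\<lambda>b. qpoch b Q j) [a * Q, t * c, t * d])) * Q ^ j)
        = \<alpha> j * G (t * Q^j)"
      unfolding G_def \<alpha>_def shift[OF tc] shift[OF td] shift[OF te] shift[OF teb]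
      using aQ[of j] tc[of j] td[of j] te[of j] teb[of j] Ie Ieb qpoch_qq_nz[OF QQ, of j]
      by (simp add: field_simps)
  qed

  have "(\<lambda>k. t ^ k / qpoch Q Q k * little_qJacobi n (Q^k) a b Q * al_salam_chihara k \<theta> c d Q)
      sums (G t * qphi [inverse (Q ^ n), a * b * Q ^ (n + 1), t * e, t * eb] [a * Q, t * c, t * d] Q Q)"
    unfolding TM RHS by (rule S)
  thus ?thesis unfolding Q_def e_def eb_def G_def by simp
qed

end
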